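(* Let $N\ge 2$, let $D_1^N,\ldots,D_N^N:\mathbb{R}_+^N\to\mathbb{R}$ satisfy (A1)–(A3) below, and let the lower-level demand functions $D^n_i$ ($1\le n\le N-1$, $1\le i\le n$) be defined by the consistency recursion below and satisfy (A4). Then for each $n$ the functions $D_i^n$, $i=1,\ldots,n$, are smooth in all variables and satisfy $\partial D_i^n/\partial p_j>0$ for $j\ne i$; they inherit the exchangeability property (A2) (with $N$ replaced by $n$); and for every price vector $p$ with $p_1\le p_2\le\cdots\le p_N$ and every $1\le n\le N$, $$D_1^n(p_1,\ldots,p_n)\ge D_2^n(p_1,\ldots,p_n)\ge\cdots\ge D_n^n(p_1,\ldots,p_n).$$
   Context: (A1) Each $D_i^N$ is smooth, $D_N^N(0,\ldots,0)>0$, $\partial D_i^N/\partial p_i<0$, and $\partial D_i^N/\partial p_j>0$ for $j\ne i$. (A2) Exchangeability: $D_i^N(p_1,\ldots,p_i,\ldots,p_j,\ldots,p_N)=D_j^N(p_1,\ldots,p_j,\ldots,p_i,\ldots,p_N)$ for all $i,j$ (entries $i,j$ swapped), hence $D_i^N$ is invariant under permutations of the other firms' prices. (A3) For every $i$ and every vector of the other prices there is a finite choke price at which $D_i^N=0$. Consistency recursion: for $n=N-1,\ldots,1$, $D_i^n(p_1,\ldots,p_n)=D_i^{n+1}(p_1,\ldots,p_n,\hat p_{n+1})$ for $i\le n$, where $\hat p_{n+1}(p_1,\ldots,p_n)$ is the (finite) price with $D^{n+1}_{n+1}(p_1,\ldots,p_n,\hat p_{n+1})=0$. (A4) $\partial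 D^n_i/\partial p_i<0$ for all $n\le N-1$ and $i\le n$. *)

theory Defs
  imports "HOL-Analysis.Analysis"
begin

text \<open>Price vectors of n firms are encoded as functions nat => real whose
  coordinates 1..n are the prices and which vanish outside {1..n}.\<close>

definition orthant :: "nat \<Rightarrow> (nat \<Rightarrow> real) set" where
  "orthant n = {p. (\<forall>j\<in>{1..n}. 0 \<le> p j) \<and> (\<forall>j. j \<notin> {1..n} \<longrightarrow> p j = 0)}"

definition restr :: "nat \<Rightarrow> (nat \<Rightarrow> real) \<Rightarrow> (nat \<Rightarrow> real)" where
  "restr n p = (\<lambda>j. if j \<in> {1..n} then p j else 0)"

text \<open>d is the partial derivative of f with respect to the j-th variable at p,
  relative to the domain S (one-sided on the boundary of the orthant).\<close>

definition has_partial ::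
  "((nat \<Rightarrow> real) \<Rightarrow> real) \<Rightarrow> nat \<Rightarrow> real \<Rightarrow> (nat \<Rightarrow> real) \<Rightarrow> (nat \<Rightarrow> real) set \<Rightarrow> bool" where
  "has_partial f j d p S \<longleftrightarrow>
     ((\<lambda>t. f (p(j := t))) has_real_derivative d) (at (p j) within {t. p(j := t) \<in> S})"

definition smooth_on_orthant :: "nat \<Rightarrow> ((nat \<Rightarrow> real) \<Rightarrow> real) \<Rightarrow> bool" where
  "smooth_on_orthant n f \<longleftrightarrow>
     (\<exists>F :: nat list \<Rightarrow> (nat \<Rightarrow> real) \<Rightarrow> real.
        (\<forall>p\<in>orthant n. F [] p = f p) \<and>
        (\<forall>js. set js \<subseteq> {1..n} \<longrightarrow>
           continuous_on (orthant n) (F js) \<and>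
           (\<forall>j\<in>{1..n}. \<forall>p\<in>orthant n. has_partial (F js) j (F (j # js) p) p (orthant n))))"

end

theory Submission
  imports Defs
begin


lemma orth_upd_iff:
  assumes "p \<in> orthant n" "j \<in> {1..n}"
  shows "p(j := t) \<in> orthant n \<longleftrightarrow> t \<ge> 0"
  using assms unfolding orthant_def by auto

lemma orth_dir: "p \<in> orthant n \<Longrightarrow> j \<in> {1..n} \<Longrightarrow> {t. p(j := t) \<in> orthant n} = {t. t \<ge> 0}"
  using orth_upd_iff by blast

lemma orth_nonneg: "p \<in> orthant n \<Longrightarrow> j \<in> {1..n} \<Longrightarrow> p j \<ge> 0"
  unfolding orthant_def by auto

lemma has_partial_orth:
  assumes "p \<in> orthant n" "j \<in> {1..n}"
  shows "has_partial f j d p (orthant n) \<longleftrightarrow>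
    ((\<lambda>t. f (p(j := t))) has_real_derivative d) (at (p j) within {t. t \<ge> 0})"
  unfolding has_partial_def orth_dir[OF assms] ..

lemma has_partial_cong:
  assumes "\<forall>x\<in>orthant n. f x = g x" "p \<in> orthant n" "j \<in> {1..n}"
    and "has_partial f j d p (orthant n)"
  shows "has_partial g j d p (orthant n)"
proof -
  have "((\<lambda>t. g (p(j := t))) has_real_derivative d) (at (p j) within {t. t \<ge> 0})"
    apply (rule has_field_derivative_transform_within[where d=1])
    using assms(4) has_partial_orth[OF assms(2,3)] apply simp
      apply simp
    using orth_nonneg[OF assms(2,3)] apply simp
    using assms(1) orth_upd_iff[OF assms(2,3)] by auto
  then show ?thesis using has_partial_orth[OF assms(2,3)] by simp
qed

lemma at_nonneg_nontriv: "(x::real) \<ge> 0 \<Longrightarrow> at x within {t. t \<ge> 0} \<noteq> bot"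
proof
  assume "x \<ge> 0" "at x within {t. t \<ge> 0} = bot"
  have "at_right x \<le> at x within {t. t \<ge> 0}"
    by (rule at_le) (use \<open>x \<ge> 0\<close> in auto)
  then show False using \<open>at x within {t. t \<ge> 0} = bot\<close> trivial_limit_at_right_real
    by (simp add: bot_unique)
qed

lemma has_partial_unique:
  assumes "p \<in> orthant n" "j \<in> {1..n}"
    "has_partial f j d1 p (orthant n)" "has_partial f j d2 p (orthant n)"
  shows "d1 = d2"
proof -
  have nb: "at (p j) within {t. t \<ge> 0} \<noteq> bot" using at_nonneg_nontriv orth_nonneg assms by blast
  show ?thesis using assms(3,4) unfolding has_partial_orth[OF assms(1,2)] has_field_derivative_iff
    using tendsto_unique[OF nb] by blast
qed



lemma at_pos_within: "(x::real) > 0 \<Longrightarrow> at x within {t. t \<ge> 0} = at x"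
  by (rule at_within_open_subset[of _ "{0<..}"]) auto

lemma mono_halfline:
  fixes g :: "real \<Rightarrow> real"
  assumes d: "\<And>t. t \<ge> 0 \<Longrightarrow> (g has_real_derivative g' t) (at t within {t. t \<ge> 0})"
    and pos: "\<And>t. t \<ge> 0 \<Longrightarrow> g' t > 0"
    and ab: "0 \<le> a" "a < b"
  shows "g a < g b"
proof -
  have cont: "continuous_on {a..b} g"
  proof (rule continuous_on_subset[of "{t. t \<ge> 0}"])
    show "continuous_on {t. t \<ge> 0} g"
      unfolding continuous_on_eq_continuous_within using d DERIV_continuous by blast
  qed (use ab in auto)
  have int: "g differentiable (at x)" if "a < x" "x < b" for x
  proof -
    have "(g has_real_derivative g' x) (at x)"
      using d[of x] that ab at_pos_within[of x] by auto
    then show ?thesis using real_differentiable_def by blast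
  qed
  obtain l z where z: "a < z" "z < b" "DERIV g z :> l" "g b - g a = (b - a) * l"
    using MVT[OF ab(2) cont int] by blast
  have "(g has_real_derivative g' z) (at z)"
    using d[of z] z ab at_pos_within[of z] by auto
  then have "l = g' z" using z(3) DERIV_unique by blast
  moreover have "(b - a) * g' z > 0" using z pos[of z] ab by (simp add: mult_pos_pos)
  ultimately show ?thesis using z by simp
qed

lemma mono_halfline_le:
  fixes g :: "real \<Rightarrow> real"
  assumes d: "\<And>t. t \<ge> 0 \<Longrightarrow> (g has_real_derivative g' t) (at t within {t. t \<ge> 0})"
    and pos: "\<And>t. t \<ge> 0 \<Longrightarrow> g' t > 0"
    and ab: "0 \<le> a" "a \<le> b"
  shows "g a \<le> g b"
  using mono_halfline[OF d pos, of a b] ab by (cases "a = b") auto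

lemma anti_halfline:
  fixes g :: "real \<Rightarrow> real"
  assumes d: "\<And>t. t \<ge> 0 \<Longrightarrow> (g has_real_derivative g' t) (at t within {t. t \<ge> 0})"
    and neg: "\<And>t. t \<ge> 0 \<Longrightarrow> g' t < 0"
    and ab: "0 \<le> a" "a < b"
  shows "g a > g b"
proof -
  have "- g a < - g b"
    by (rule mono_halfline[where g'="\<lambda>t. - g' t" and g="\<lambda>t. - g t"]) (use d neg ab in \<open>auto intro: derivative_eq_intros\<close>)
  then show ?thesis by simp
qed

lemma orth_partial_line:
  assumes "p \<in> orthant n" "j \<in> {1..n}" "t \<ge> 0"
    "\<forall>x\<in>orthant n. has_partial f j (f' x) x (orthant n)"
  shows "((\<lambda>u. f (p(j := u))) has_real_derivative f' (p(j := t))) (at t within {t. t \<ge> 0})"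
proof -
  have pt: "p(j := t) \<in> orthant n" using orth_upd_iff assms by blast
  show ?thesis using assms(4)[rule_format, OF pt] has_partial_orth[OF pt assms(2)] by simp
qed

lemma orth_incr:
  assumes "p \<in> orthant n" "j \<in> {1..n}"
    "\<forall>x\<in>orthant n. has_partial f j (f' x) x (orthant n)"
    "\<forall>x\<in>orthant n. f' x > 0" "0 \<le> a" "a \<le> b"
  shows "f (p(j := a)) \<le> f (p(j := b))"
  apply (rule mono_halfline_le[where g'="\<lambda>t. f' (p(j:=t))" and g="\<lambda>u. f (p(j := u))"])
  using orth_partial_line[OF assms(1,2) _ assms(3)] assms orth_upd_iff by auto

lemma orth_decr:
  assumes "p \<in> orthant n" "j \<in> {1..n}"
    "\<forall>x\<in>orthant n. has_partial f j (f' x) x (orthant n)"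
    "\<forall>x\<in>orthant n. f' x < 0" "0 \<le> a" "a < b"
  shows "f (p(j := a)) > f (p(j := b))"
  apply (rule anti_halfline[where g'="\<lambda>t. f' (p(j:=t))" and g="\<lambda>u. f (p(j := u))"])
  using orth_partial_line[OF assms(1,2) _ assms(3)] assms orth_upd_iff by auto



definition closedP :: "nat \<Rightarrow> (((nat\<Rightarrow>real)\<Rightarrow>real) \<Rightarrow> bool) \<Rightarrow> bool" where
  "closedP n P \<longleftrightarrow> (\<forall>g. P g \<longrightarrow> continuous_on (orthant n) g \<and>
     (\<forall>j\<in>{1..n}. \<exists>g'. P g' \<and> (\<forall>p\<in>orthant n. has_partial g j (g' p) p (orthant n))))"

definition dP where
  "dP n P j g = (SOME g'. P g' \<and> (\<forall>p\<in>orthant n. has_partial g j (g' p) p (orthant n)))"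

primrec iterP where
  "iterP n P f [] = f"
| "iterP n P f (j # js) = dP n P j (iterP n P f js)"

lemma closedP_D: "closedP n P \<Longrightarrow> P g \<Longrightarrow> j \<in> {1..n} \<Longrightarrow>
   \<exists>g'. P g' \<and> (\<forall>p\<in>orthant n. has_partial g j (g' p) p (orthant n))"
  unfolding closedP_def by blast

lemma closedP_cont: "closedP n P \<Longrightarrow> P g \<Longrightarrow> continuous_on (orthant n) g"
  unfolding closedP_def by blast

lemma iterP_P:
  assumes "closedP n P" "P f"
  shows "set js \<subseteq> {1..n} \<Longrightarrow> P (iterP n P f js) \<and>
     (\<forall>j\<in>{1..n}. P (dP n P j (iterP n P f js)) \<and>
       (\<forall>p\<in>orthant n. has_partial (iterP n P f js) j (dP n P j (iterP n P f js) p) p (orthant n)))"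
proof (induction js)
  case Nil
  show ?case
  proof (intro conjI ballI)
    show "P (iterP n P f [])" using assms by simp
    fix j assume j: "j \<in> {1..n}"
    have ex: "\<exists>g'. P g' \<and> (\<forall>p\<in>orthant n. has_partial f j (g' p) p (orthant n))"
      using closedP_D[of n P f j, OF assms j] .
    show "P (dP n P j (iterP n P f []))" 
      using someI_ex[OF ex] unfolding dP_def by simp
    fix p assume "p \<in> orthant n"
    then show "has_partial (iterP n P f []) j (dP n P j (iterP n P f []) p) p (orthant n)"
      using someI_ex[OF ex] unfolding dP_def by simp
  qed
next
  case (Cons a js)
  then have Pa: "P (iterP n P f (a # js))" by simp
  show ?case
  proof (intro conjI ballI)
    show "P (iterP n P f (a # js))" by fact
    fix j assume j: "j \<in> {1..n}"
    have ex: "\<exists>g'. P g' \<and> (\<forall>p\<in>orthant n. has_partial (iterP n P f (a # js)) j (g' p) p (orthant n))"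
      using closedP_D[of n P "iterP n P f (a # js)" j, OF assms(1) Pa j] .
    show "P (dP n P j (iterP n P f (a # js)))"
      using someI_ex[OF ex] unfolding dP_def by simp
    fix p assume "p \<in> orthant n"
    then show "has_partial (iterP n P f (a # js)) j (dP n P j (iterP n P f (a # js)) p) p (orthant n)"
      using someI_ex[OF ex] unfolding dP_def by simp
  qed
qed

lemma smooth_iff: "smooth_on_orthant n f \<longleftrightarrow> (\<exists>P. closedP n P \<and> P f)"
proof
  assume "smooth_on_orthant n f"
  then obtain F where F0: "\<forall>p\<in>orthant n. F [] p = f p"
    and F: "\<forall>js. set js \<subseteq> {1..n} \<longrightarrow>
           continuous_on (orthant n) (F js) \<and>
           (\<forall>j\<in>{1..n}. \<forall>p\<in>orthant n. has_partial (F js) j (F (j # js) p) p (orthant n))"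
    unfolding smooth_on_orthant_def by (elim exE conjE)
  define P where "P g = (\<exists>js. set js \<subseteq> {1..n} \<and> (\<forall>p\<in>orthant n. g p = F js p))" for g
  have "closedP n P" unfolding closedP_def
  proof (intro allI impI conjI ballI)
    fix g assume "P g"
    then obtain js where js: "set js \<subseteq> {1..n}" "\<forall>p\<in>orthant n. g p = F js p" unfolding P_def by (elim exE conjE)
    have "continuous_on (orthant n) (F js)" using F js by blast
    then show "continuous_on (orthant n) g"
      by (rule continuous_on_eq) (use js(2) in auto)
    fix j assume j: "j \<in> {1..n}"
    have "P (F (j # js))" unfolding P_def using js j by (intro exI[of _ "j # js"]) auto
    moreover have "\<forall>p\<in>orthant n. has_partial g j (F (j # js) p) p (orthant n)"
    proof
      fix p assume p: "p \<in> orthant n"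
      have "has_partial (F js) j (F (j # js) p) p (orthant n)" using F js j p by blast
      then show "has_partial g j (F (j # js) p) p (orthant n)"
        using has_partial_cong[of n "F js" g p j] js(2) p j by simp
    qed
    ultimately show "\<exists>g'. P g' \<and> (\<forall>p\<in>orthant n. has_partial g j (g' p) p (orthant n))" by blast
  qed
  moreover have "P f" unfolding P_def using F0 by (intro exI[of _ "[]"]) auto
  ultimately show "\<exists>P. closedP n P \<and> P f" by (intro exI[of _ P] conjI)
next
  assume "\<exists>P. closedP n P \<and> P f"
  then obtain P where P: "closedP n P" "P f" by (elim exE conjE)
  show "smooth_on_orthant n f" unfolding smooth_on_orthant_def
  proof (intro exI[of _ "iterP n P f"] conjI allI impI ballI)
    fix js :: "nat list" assume js: "set js \<subseteq> {1..n}"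
    note I = iterP_P[of n P f, OF P js]
    show "continuous_on (orthant n) (iterP n P f js)" using I closedP_cont[of n P "iterP n P f js", OF P(1)] by simp
    fix j p assume "j \<in> {1..n}" "p \<in> orthant n"
    then show "has_partial (iterP n P f js) j (iterP n P f (j # js) p) p (orthant n)"
      using I by simp
  qed simp
qed

abbreviation "sm \<equiv> smooth_on_orthant"

lemma sm_coind: "closedP n P \<Longrightarrow> P f \<Longrightarrow> sm n f"
  by (rule smooth_iff[of n f, THEN iffD2], rule exI[of _ P], rule conjI)

lemma sm_closed: "closedP n (sm n)"
  unfolding closedP_def
proof (intro allI impI conjI ballI)
  fix g assume "sm n g"
  then have "\<exists>P. closedP n P \<and> P g" by (rule smooth_iff[of n g, THEN iffD1])
  then obtain P where P: "closedP n P" "P g" by (elim exE conjE)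
  then show "continuous_on (orthant n) g" using closedP_cont[of n P g] by simp
  fix j assume j: "j \<in> {1..n}"
  obtain g' where "P g'" "\<forall>p\<in>orthant n. has_partial g j (g' p) p (orthant n)"
    using closedP_D[of n P g j, OF P j] by (elim exE conjE) 
  moreover have "sm n g'" using sm_coind[of n P g', OF P(1) \<open>P g'\<close>] .
  ultimately show "\<exists>g'. sm n g' \<and> (\<forall>p\<in>orthant n. has_partial g j (g' p) p (orthant n))"
    by (intro exI[of _ g'] conjI)
qed

lemma sm_cont: "sm n f \<Longrightarrow> continuous_on (orthant n) f"
  using closedP_cont[of n "sm n" f, OF sm_closed] .

lemma sm_partial: "sm n f \<Longrightarrow> j \<in> {1..n} \<Longrightarrow>
  \<exists>f'. sm n f' \<and> (\<forall>p\<in>orthant n. has_partial f j (f' p) p (orthant n))"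
  using closedP_D[of n "sm n" f j, OF sm_closed] .

lemma sm_cong:
  assumes "sm n f" "\<forall>p\<in>orthant n. f p = g p"
  shows "sm n g"
proof -
  define P where "P g = (\<exists>f. sm n f \<and> (\<forall>p\<in>orthant n. f p = g p))" for g
  have "closedP n P" unfolding closedP_def
  proof (intro allI impI conjI ballI)
    fix g assume "P g"
    then obtain f where f: "sm n f" "\<forall>p\<in>orthant n. f p = g p" unfolding P_def by (elim exE conjE)
    show "continuous_on (orthant n) g"
      by (rule continuous_on_eq[OF sm_cont[OF f(1)]]) (use f(2) in auto)
    fix j assume j: "j \<in> {1..n}"
    obtain f' where f': "sm n f'" "\<forall>p\<in>orthant n. has_partial f j (f' p) p (orthant n)"
      using sm_partial[OF f(1) j] by (elim exE conjE)
    have "P f'" unfolding P_def by (intro exI[of _ f'] conjI f'(1)) simp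
    moreover have "\<forall>p\<in>orthant n. has_partial g j (f' p) p (orthant n)"
    proof
      fix p assume p: "p \<in> orthant n"
      show "has_partial g j (f' p) p (orthant n)"
        using has_partial_cong[of n f g p j, OF f(2) p j] f'(2) p by simp
    qed
    ultimately show "\<exists>g'. P g' \<and> (\<forall>p\<in>orthant n. has_partial g j (g' p) p (orthant n))"
      by (intro exI[of _ f'] conjI)
  qed
  moreover have "P g" unfolding P_def by (intro exI[of _ f] conjI assms)
  ultimately show ?thesis using sm_coind[of n P g] by blast
qed



lemma has_partial_const: "has_partial (\<lambda>_. c) j 0 p S"
  unfolding has_partial_def by (rule DERIV_const)

lemma has_partial_add: "has_partial f j a p S \<Longrightarrow> has_partial g j b p S \<Longrightarrow>
  has_partial (\<lambda>x. f x + g x) j (a + b) p S"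
  unfolding has_partial_def by (rule DERIV_add)

lemma has_partial_mult: "has_partial f j a p S \<Longrightarrow> has_partial g j b p S \<Longrightarrow>
  has_partial (\<lambda>x. f x * g x) j (a * g p + f p * b) p S"
  unfolding has_partial_def
proof -
  assume a: "((\<lambda>t. f (p(j := t))) has_real_derivative a) (at (p j) within {t. p(j := t) \<in> S})"
    and b: "((\<lambda>t. g (p(j := t))) has_real_derivative b) (at (p j) within {t. p(j := t) \<in> S})"
  have "((\<lambda>t. f (p(j := t)) * g (p(j := t))) has_real_derivative a * g (p(j := p j)) + b * f (p(j := p j)))
     (at (p j) within {t. p(j := t) \<in> S})" by (rule DERIV_mult[OF a b])
  then show "((\<lambda>t. f (p(j := t)) * g (p(j := t))) has_real_derivative a * g p + f p * b)
     (at (p j) within {t. p(j := t) \<in> S})" by (simp add: mult.commute)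
qed

definition dd :: "nat \<Rightarrow> nat \<Rightarrow> ((nat\<Rightarrow>real)\<Rightarrow>real) \<Rightarrow> ((nat\<Rightarrow>real)\<Rightarrow>real)" where
  "dd n j f = (SOME f'. sm n f' \<and> (\<forall>p\<in>orthant n. has_partial f j (f' p) p (orthant n)))"

lemma dd: assumes "sm n f" "j \<in> {1..n}"
  shows "sm n (dd n j f)" "\<forall>p\<in>orthant n. has_partial f j (dd n j f p) p (orthant n)"
  using someI_ex[OF sm_partial[OF assms]] unfolding dd_def by blast+

lemma sm_const: "sm n (\<lambda>_. c)"
proof -
  define P where "P g = (\<exists>c. g = (\<lambda>_::nat\<Rightarrow>real. c))" for g :: "(nat\<Rightarrow>real)\<Rightarrow>real"
  have "closedP n P" unfolding closedP_def
  proof (intro allI impI conjI ballI)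
    fix g assume "P g"
    then obtain c where c: "g = (\<lambda>_. c)" unfolding P_def by (elim exE)
    show "continuous_on (orthant n) g" unfolding c by (rule continuous_on_const)
    fix j assume "j \<in> {1..n}"
    have "P (\<lambda>_. 0)" unfolding P_def by (intro exI[of _ 0]) (rule refl)
    moreover have "\<forall>p\<in>orthant n. has_partial g j ((\<lambda>_. 0) p) p (orthant n)"
      unfolding c using has_partial_const by simp
    ultimately show "\<exists>g'. P g' \<and> (\<forall>p\<in>orthant n. has_partial g j (g' p) p (orthant n))"
      by (intro exI[of _ "\<lambda>_. 0"] conjI)
  qed
  moreover have "P (\<lambda>_. c)" unfolding P_def by blast
  ultimately show ?thesis using sm_coind[of n P "\<lambda>_. c"] by blast
qed

definition sop :: "(((nat\<Rightarrow>real)\<Rightarrow>real) \<times> ((nat\<Rightarrow>real)\<Rightarrow>real)) list \<Rightarrow> (nat\<Rightarrow>real) \<Rightarrow> real" where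
  "sop L p = (\<Sum>ab\<leftarrow>L. fst ab p * snd ab p)"

lemma sop_simps [simp]: "sop [] p = 0" "sop (ab # L) p = fst ab p * snd ab p + sop L p"
  unfolding sop_def by simp_all

lemma sop_append [simp]: "sop (L1 @ L2) p = sop L1 p + sop L2 p"
  unfolding sop_def by simp

lemma sop_cont: "\<forall>ab\<in>set L. sm n (fst ab) \<and> sm n (snd ab) \<Longrightarrow> continuous_on (orthant n) (sop L)"
proof (induction L)
  case Nil
  then show ?case by (simp add: sop_def)
next
  case (Cons ab L)
  then have c: "continuous_on (orthant n) (sop L)" by auto
  have "continuous_on (orthant n) (fst ab)" "continuous_on (orthant n) (snd ab)"
    using Cons.prems sm_cont by auto
  then have "continuous_on (orthant n) (\<lambda>p. fst ab p * snd ab p + sop L p)"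
    using c by (intro continuous_intros)
  then show ?case by simp
qed

definition dL where
  "dL n j L = concat (map (\<lambda>ab. [(dd n j (fst ab), snd ab), (fst ab, dd n j (snd ab))]) L)"

lemma sop_partial:
  assumes "\<forall>ab\<in>set L. sm n (fst ab) \<and> sm n (snd ab)" "j \<in> {1..n}" "p \<in> orthant n"
  shows "has_partial (sop L) j (sop (dL n j L) p) p (orthant n)
     \<and> (\<forall>ab\<in>set (dL n j L). sm n (fst ab) \<and> sm n (snd ab))"
  using assms(1)
proof (induction L)
  case Nil
  then show ?case using has_partial_const[of 0 j p "orthant n"]
    by (simp add: dL_def sop_def[abs_def])
next
  case (Cons ab L)
  have s: "sm n (fst ab)" "sm n (snd ab)" using Cons.prems by auto
  have h1: "has_partial (fst ab) j (dd n j (fst ab) p) p (orthant n)"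
    using dd(2)[OF s(1) assms(2)] assms(3) by blast
  have h2: "has_partial (snd ab) j (dd n j (snd ab) p) p (orthant n)"
    using dd(2)[OF s(2) assms(2)] assms(3) by blast
  have IH: "has_partial (sop L) j (sop (dL n j L) p) p (orthant n)"
     "\<forall>ab\<in>set (dL n j L). sm n (fst ab) \<and> sm n (snd ab)" using Cons by auto
  have e: "sop (ab # L) = (\<lambda>x. fst ab x * snd ab x + sop L x)" by (rule ext) simp
  have dl: "dL n j (ab # L) = [(dd n j (fst ab), snd ab), (fst ab, dd n j (snd ab))] @ dL n j L"
    by (simp add: dL_def)
  have "has_partial (\<lambda>x. fst ab x * snd ab x + sop L x) j
     ((dd n j (fst ab) p * snd ab p + fst ab p * dd n j (snd ab) p) + sop (dL n j L) p) p (orthant n)"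
    by (rule has_partial_add[OF has_partial_mult[OF h1 h2] IH(1)])
  then have "has_partial (sop (ab # L)) j (sop (dL n j (ab # L)) p) p (orthant n)"
    unfolding e dl by (simp add: add.assoc)
  moreover have "\<forall>ab\<in>set (dL n j (ab # L)). sm n (fst ab) \<and> sm n (snd ab)"
    using IH(2) dd(1)[OF s(1) assms(2)] dd(1)[OF s(2) assms(2)] s unfolding dl by auto
  ultimately show ?case by blast
qed

lemma sm_sop: "\<forall>ab\<in>set L. sm n (fst ab) \<and> sm n (snd ab) \<Longrightarrow> sm n (sop L)"
proof -
  define P where "P g = (\<exists>L. (\<forall>ab\<in>set L. sm n (fst ab) \<and> sm n (snd ab)) \<and> g = sop L)" for g
  have "closedP n P" unfolding closedP_def
  proof (intro allI impI conjI ballI)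
    fix g assume "P g"
    then obtain L where L: "\<forall>ab\<in>set L. sm n (fst ab) \<and> sm n (snd ab)" "g = sop L"
      unfolding P_def by (elim exE conjE)
    show "continuous_on (orthant n) g" using sop_cont[OF L(1)] L(2) by simp
    fix j assume j: "j \<in> {1..n}"
    have z: "(\<lambda>_. 0) \<in> orthant n" unfolding orthant_def by simp
    have "P (sop (dL n j L))" unfolding P_def
      using sop_partial[OF L(1) j z] by blast
    moreover have "\<forall>p\<in>orthant n. has_partial g j (sop (dL n j L) p) p (orthant n)"
      using sop_partial[OF L(1) j] L(2) by blast
    ultimately show "\<exists>g'. P g' \<and> (\<forall>p\<in>orthant n. has_partial g j (g' p) p (orthant n))" by blast
  qed
  moreover assume "\<forall>ab\<in>set L. sm n (fst ab) \<and> sm n (snd ab)"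
  then have "P (sop L)" unfolding P_def by blast
  ultimately show "sm n (sop L)" using sm_coind[of n P "sop L"] by blast
qed



lemma sm_mult: "sm n f \<Longrightarrow> sm n g \<Longrightarrow> sm n (\<lambda>x. f x * g x)"
  using sm_sop[of "[(f, g)]" n] by (simp add: sop_def[abs_def])

lemma sm_add: "sm n f \<Longrightarrow> sm n g \<Longrightarrow> sm n (\<lambda>x. f x + g x)"
  using sm_sop[of "[(f, \<lambda>_. 1), (g, \<lambda>_. 1)]" n] sm_const[of n 1] by (simp add: sop_def[abs_def])

lemma sm_diff: "sm n f \<Longrightarrow> sm n g \<Longrightarrow> sm n (\<lambda>x. f x - g x)"
  using sm_sop[of "[(f, \<lambda>_. 1), (g, \<lambda>_. -1)]" n] sm_const[of n 1] sm_const[of n "-1"]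
  by (simp add: sop_def[abs_def])

lemma sm_cmult: "sm n f \<Longrightarrow> sm n (\<lambda>x. c * f x)"
  using sm_mult[OF sm_const[of n c]] by simp

lemma has_partial_divpow:
  assumes "has_partial g j a p S" "has_partial f j b p S" "f p \<noteq> 0"
  shows "has_partial (\<lambda>x. g x / f x ^ k) j ((a * f p - real k * g p * b) / f p ^ (Suc k)) p S"
proof -
  have f1: "((\<lambda>t. g (p(j := t))) has_real_derivative a) (at (p j) within {t. p(j := t) \<in> S})"
    using assms(1) unfolding has_partial_def .
  have f2: "((\<lambda>t. f (p(j := t))) has_real_derivative b) (at (p j) within {t. p(j := t) \<in> S})"
    using assms(2) unfolding has_partial_def .
  have f3: "((\<lambda>t. f (p(j := t)) ^ k) has_real_derivative real k * b * f p ^ (k - Suc 0))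
     (at (p j) within {t. p(j := t) \<in> S})"
    using DERIV_power[OF f2, of k] by (simp add: mult.assoc)
  have f4: "((\<lambda>t. g (p(j := t)) / f (p(j := t)) ^ k) has_real_derivative
     (a * f p ^ k - g p * (real k * b * f p ^ (k - Suc 0))) / (f p ^ k * f p ^ k))
     (at (p j) within {t. p(j := t) \<in> S})"
    using DERIV_divide[OF f1 f3] assms(3) by simp
  have eq: "(a * f p ^ k - g p * (real k * b * f p ^ (k - Suc 0))) / (f p ^ k * f p ^ k)
     = (a * f p - real k * g p * b) / f p ^ (Suc k)"
  proof (cases k)
    case 0
    then show ?thesis using assms(3) by (simp add: field_simps)
  next
    case (Suc m)
    then show ?thesis using assms(3) by (simp add: field_simps power_add[symmetric])
  qed
  show ?thesis unfolding has_partial_def using f4 unfolding eq by simp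
qed

lemma sm_divpow:
  assumes f: "sm n f" "\<forall>p\<in>orthant n. f p \<noteq> 0" and g: "sm n g"
  shows "sm n (\<lambda>x. g x / f x ^ k)"
proof -
  define P where "P h = (\<exists>g k. sm n g \<and> (\<forall>p\<in>orthant n. h p = g p / f p ^ k))" for h
  have "closedP n P" unfolding closedP_def
  proof (intro allI impI conjI ballI)
    fix h assume "P h"
    then obtain g k where g: "sm n g" "\<forall>p\<in>orthant n. h p = g p / f p ^ k"
      unfolding P_def by (elim exE conjE)
    have "continuous_on (orthant n) (\<lambda>p. g p / f p ^ k)"
      using sm_cont[OF g(1)] sm_cont[OF f(1)] f(2) by (intro continuous_intros) auto
    then show "continuous_on (orthant n) h"
      by (rule continuous_on_eq) (use g(2) in auto)
    fix j assume j: "j \<in> {1..n}"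
    define G where "G x = dd n j g x * f x - real k * g x * dd n j f x" for x
    have sG: "sm n G" unfolding G_def
      by (intro sm_diff sm_mult sm_cmult dd(1) g(1) f(1) j)
    have "P (\<lambda>x. G x / f x ^ Suc k)" unfolding P_def
      by (intro exI[of _ G] exI[of _ "Suc k"] conjI sG) simp
    moreover have "\<forall>p\<in>orthant n. has_partial h j ((\<lambda>x. G x / f x ^ Suc k) p) p (orthant n)"
    proof
      fix p assume p: "p \<in> orthant n"
      have "has_partial (\<lambda>x. g x / f x ^ k) j ((dd n j g p * f p - real k * g p * dd n j f p) / f p ^ (Suc k)) p (orthant n)"
        by (rule has_partial_divpow) (use dd(2)[OF g(1) j] dd(2)[OF f(1) j] p f(2) in auto)
      then show "has_partial h j ((\<lambda>x. G x / f x ^ Suc k) p) p (orthant n)"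
        using has_partial_cong[of n "\<lambda>x. g x / f x ^ k" h p j] g(2) p j unfolding G_def by simp
    qed
    ultimately show "\<exists>g'. P g' \<and> (\<forall>p\<in>orthant n. has_partial h j (g' p) p (orthant n))"
      by (intro exI[of _ "\<lambda>x. G x / f x ^ Suc k"] conjI)
  qed
  moreover have "P (\<lambda>x. g x / f x ^ k)" unfolding P_def
    by (intro exI[of _ g] exI[of _ k] conjI g) simp
  ultimately show ?thesis using sm_coind[of n P "\<lambda>x. g x / f x ^ k"] by blast
qed

lemma sm_inverse: "sm n f \<Longrightarrow> \<forall>p\<in>orthant n. f p \<noteq> 0 \<Longrightarrow> sm n (\<lambda>x. 1 / f x)"
  using sm_divpow[of n f "\<lambda>_. 1" 1] sm_const[of n 1] by simp



lemma ev_within_self: "eventually (\<lambda>x. x \<in> S) (at a within S)"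
  by (auto simp: eventually_at_filter)

lemma cont_coord: "continuous_on S (\<lambda>x::nat\<Rightarrow>real. x k)"
  by (rule continuous_on_subset[OF continuous_on_product_coordinates]) auto

lemma orth_ext: "p \<in> orthant n \<Longrightarrow> t \<ge> 0 \<Longrightarrow> p(Suc n := t) \<in> orthant (Suc n)"
  unfolding orthant_def by auto

lemma orth_last0: "p \<in> orthant n \<Longrightarrow> p (Suc n) = 0"
  unfolding orthant_def by auto

lemma orth_m: "Suc n \<in> {1..Suc n}" by simp

lemma orth_j: "j \<in> {1..n} \<Longrightarrow> j \<in> {1..Suc n}" by simp

lemma mvt_half:
  fixes g :: "real \<Rightarrow> real"
  assumes d: "\<And>t. t \<ge> 0 \<Longrightarrow> (g has_real_derivative g' t) (at t within {t. t \<ge> 0})"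
    and ab: "0 \<le> a" "0 \<le> b"
  shows "\<exists>\<xi>. min a b \<le> \<xi> \<and> \<xi> \<le> max a b \<and> g b - g a = g' \<xi> * (b - a)"
proof -
  have gen: "\<exists>z. u < z \<and> z < v \<and> g v - g u = g' z * (v - u)" if uv: "0 \<le> u" "u < v" for u v
  proof -
    have cont: "continuous_on {u..v} g"
    proof (rule continuous_on_subset[of "{t. t \<ge> 0}"])
      show "continuous_on {t. t \<ge> 0} g"
        unfolding continuous_on_eq_continuous_within using d DERIV_continuous by blast
    qed (use uv in auto)
    have int: "g differentiable (at x)" if "u < x" "x < v" for x
    proof -
      have "(g has_real_derivative g' x) (at x)"
        using d[of x] that uv at_pos_within[of x] by auto
      then show ?thesis using real_differentiable_def by blast
    qed
    obtain l z where z: "u < z" "z < v" "DERIV g z :> l" "g v - g u = (v - u) * l"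
      using MVT[OF uv(2) cont int] by blast
    have "(g has_real_derivative g' z) (at z)"
      using d[of z] z uv at_pos_within[of z] by auto
    then have "l = g' z" using z(3) DERIV_unique by blast
    then show ?thesis using z by (auto simp: mult.commute)
  qed
  consider "a = b" | "a < b" | "b < a" by linarith
  then show ?thesis
  proof cases
    case 1 then show ?thesis by (intro exI[of _ a]) auto
  next
    case 2 then obtain z where "a < z" "z < b" "g b - g a = g' z * (b - a)" using gen ab by blast
    then show ?thesis by (intro exI[of _ z]) auto
  next
    case 3 then obtain z where "b < z" "z < a" "g a - g b = g' z * (a - b)" using gen ab by blast
    then show ?thesis by (intro exI[of _ z]) (auto simp: algebra_simps)
  qed
qed

lemma Y_cont: "continuous_on UNIV (\<lambda>z::real\<times>real. (p::nat\<Rightarrow>real)(j := fst z, k := snd z))"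
proof (rule continuous_on_coordinatewise_then_product)
  fix i
  show "continuous_on UNIV (\<lambda>z::real\<times>real. (p(j := fst z, k := snd z)) i)"
    by (cases "i = k"; cases "i = j") (auto intro!: continuous_intros)
qed

lemma Y_tendsto:
  fixes p :: "nat \<Rightarrow> real"
  assumes "(a \<longlongrightarrow> a0) F" "(b \<longlongrightarrow> b0) F"
  shows "((\<lambda>z. p(j := a z, k := b z)) \<longlongrightarrow> p(j := a0, k := b0)) F"
  using continuous_on_tendsto_compose[OF Y_cont[of p j k] tendsto_Pair[OF assms]] by simp



lemma upd_cont:
  assumes "continuous_on S c"
  shows "continuous_on S (\<lambda>x::nat\<Rightarrow>real. x(k := c x))"
proof (rule continuous_on_coordinatewise_then_product)
  fix i
  show "continuous_on S (\<lambda>x. (x(k := c x)) i)"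
    by (cases "i = k") (auto simp: assms cont_coord)
qed

lemma upd1_tendsto:
  fixes p :: "nat \<Rightarrow> real"
  assumes "(a \<longlongrightarrow> a0) F"
  shows "((\<lambda>z. p(j := a z)) \<longlongrightarrow> p(j := a0)) F"
  using Y_tendsto[OF assms assms, of p j j] by simp

locale impl =
  fixes n :: nat and H hh :: "(nat\<Rightarrow>real)\<Rightarrow>real"
  assumes smH: "sm (Suc n) H"
    and Hneg: "\<forall>x\<in>orthant (Suc n). dd (Suc n) (Suc n) H x < 0"
    and hh0: "\<forall>p\<in>orthant n. hh p \<ge> 0"
    and hhz: "\<forall>p\<in>orthant n. H (p(Suc n := hh p)) = 0"
begin

lemma H_strict:
  assumes p: "p \<in> orthant n" and ab: "0 \<le> a" "a < b"
  shows "H (p(Suc n := a)) > H (p(Suc n := b))"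
proof -
  have q: "p(Suc n := 0) \<in> orthant (Suc n)" using orth_ext[OF p] by simp
  have "H ((p(Suc n := 0))(Suc n := a)) > H ((p(Suc n := 0))(Suc n := b))"
    by (rule orth_decr[OF q orth_m dd(2)[OF smH orth_m] Hneg ab])
  then show ?thesis by simp
qed

lemma H_pos: "p \<in> orthant n \<Longrightarrow> 0 \<le> t \<Longrightarrow> t < hh p \<Longrightarrow> H (p(Suc n := t)) > 0"
  using H_strict[of p t "hh p"] hhz by auto

lemma H_neg: "p \<in> orthant n \<Longrightarrow> hh p < t \<Longrightarrow> H (p(Suc n := t)) < 0"
  using H_strict[of p "hh p" t] hhz hh0 by auto

lemma hh_unique: "p \<in> orthant n \<Longrightarrow> 0 \<le> t \<Longrightarrow> H (p(Suc n := t)) = 0 \<Longrightarrow> t = hh p"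
  using H_pos H_neg by (metis less_irrefl linorder_neqE_linordered_idom)

lemma H_line_cont: "t \<ge> 0 \<Longrightarrow> continuous_on (orthant n) (\<lambda>x. H (x(Suc n := t)))"
proof -
  assume t: "t \<ge> 0"
  have "continuous_on (orthant n) (H \<circ> (\<lambda>x. x(Suc n := t)))"
  proof (rule continuous_on_compose)
    show "continuous_on (orthant n) (\<lambda>x. x(Suc n := t))"
      by (rule upd_cont) (rule continuous_on_const)
    show "continuous_on ((\<lambda>x. x(Suc n := t)) ` orthant n) H"
      by (rule continuous_on_subset[OF sm_cont[OF smH]]) (use orth_ext t in auto)
  qed
  then show ?thesis by (simp add: o_def)
qed

lemma hh_cont: "continuous_on (orthant n) hh"
  unfolding continuous_on_def
proof
  fix p assume p: "p \<in> orthant n"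
  show "(hh \<longlongrightarrow> hh p) (at p within orthant n)"
    unfolding tendsto_iff
  proof (intro allI impI)
    fix e :: real assume e: "e > 0"
    have t1: "H (p(Suc n := hh p + e)) < 0" using H_neg[OF p] e by simp
    have "((\<lambda>x. H (x(Suc n := hh p + e))) \<longlongrightarrow> H (p(Suc n := hh p + e))) (at p within orthant n)"
      using H_line_cont[of "hh p + e"] hh0 p e unfolding continuous_on_def
      by (metis add_nonneg_nonneg less_eq_real_def)
    then have ev1: "eventually (\<lambda>x. H (x(Suc n := hh p + e)) < 0) (at p within orthant n)"
      using order_tendstoD(2) t1 by blast
    have ev2: "eventually (\<lambda>x. hh x > hh p - e) (at p within orthant n)"
    proof (cases "hh p - e < 0")
      case True
      then show ?thesis using ev_within_self[of "orthant n" p]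
        by (rule_tac eventually_mono) (use hh0 in force)+
    next
      case False
      have t0: "H (p(Suc n := hh p - e)) > 0" using H_pos[OF p] e False by simp
      have "((\<lambda>x. H (x(Suc n := hh p - e))) \<longlongrightarrow> H (p(Suc n := hh p - e))) (at p within orthant n)"
        using H_line_cont[of "hh p - e"] p False unfolding continuous_on_def by simp
      then have "eventually (\<lambda>x. H (x(Suc n := hh p - e)) > 0) (at p within orthant n)"
        using order_tendstoD(1) t0 by blast
      then show ?thesis using ev_within_self[of "orthant n" p]
      proof (rule eventually_elim2)
        fix x assume x: "H (x(Suc n := hh p - e)) > 0" "x \<in> orthant n"
        show "hh x > hh p - e"
        proof (rule ccontr)
          assume "\<not> hh x > hh p - e"
          then have "hh x \<le> hh p - e" by simp
          moreover have "H (x(Suc n := hh p - e)) \<le> 0"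
          proof (cases "hh x = hh p - e")
            case True
            have "H (x(Suc n := hh x)) = 0" using hhz x(2) by blast
            then show ?thesis using True by simp
          next
            case False
            then have "hh x < hh p - e" using \<open>hh x \<le> hh p - e\<close> by simp
            then show ?thesis using H_neg[OF x(2), of "hh p - e"] by simp
          qed
          ultimately show False using x(1) by simp
        qed
      qed
    qed
    have ev3: "eventually (\<lambda>x. hh x < hh p + e) (at p within orthant n)"
      using ev1 ev_within_self[of "orthant n" p]
    proof (rule eventually_elim2)
      fix x assume x: "H (x(Suc n := hh p + e)) < 0" "x \<in> orthant n"
      show "hh x < hh p + e"
      proof (rule ccontr)
        assume "\<not> hh x < hh p + e"
        then have "hh p + e \<le> hh x" by simp
        moreover have "H (x(Suc n := hh p + e)) \<ge> 0"
        proof (cases "hh x = hh p + e")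
          case True
          have "H (x(Suc n := hh x)) = 0" using hhz x(2) by blast
          then show ?thesis using True by simp
        next
          case False
          then have "hh p + e < hh x" using \<open>hh p + e \<le> hh x\<close> by simp
          moreover have "hh p + e \<ge> 0" using hh0 p e by force
          ultimately show ?thesis using H_pos[OF x(2), of "hh p + e"] by simp
        qed
        ultimately show False using x(1) by simp
      qed
    qed
    show "eventually (\<lambda>x. dist (hh x) (hh p) < e) (at p within orthant n)"
      using ev2 ev3 by eventually_elim (auto simp: dist_real_def abs_less_iff)
  qed
qed

lemma comp_cont:
  assumes "sm (Suc n) G"
  shows "continuous_on (orthant n) (\<lambda>x. G (x(Suc n := hh x)))"
proof -
  have "continuous_on (orthant n) (G \<circ> (\<lambda>x. x(Suc n := hh x)))"
  proof (rule continuous_on_compose)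
    show "continuous_on (orthant n) (\<lambda>x. x(Suc n := hh x))"
      by (rule upd_cont) (rule hh_cont)
    show "continuous_on ((\<lambda>x. x(Suc n := hh x)) ` orthant n) G"
      by (rule continuous_on_subset[OF sm_cont[OF assms]]) (use orth_ext hh0 in auto)
  qed
  then show ?thesis by (simp add: o_def)
qed

end


context impl begin

lemma Yo: "p \<in> orthant n \<Longrightarrow> j \<in> {1..n} \<Longrightarrow> s \<ge> 0 \<Longrightarrow> t \<ge> 0 \<Longrightarrow>
  p(j := s, Suc n := t) \<in> orthant (Suc n)"
  using orth_ext orth_upd_iff by blast

lemma hs_tendsto:
  assumes p: "p \<in> orthant n" and j: "j \<in> {1..n}"
  shows "((\<lambda>s. hh (p(j := s))) \<longlongrightarrow> hh p) (at (p j) within {s. s \<ge> 0})"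
proof -
  have "((\<lambda>s. hh (p(j := s))) \<longlongrightarrow> hh (p(j := p j))) (at (p j) within {s. s \<ge> 0})"
  proof (rule continuous_on_tendsto_compose[OF hh_cont])
    show "((\<lambda>s. p(j := s)) \<longlongrightarrow> p(j := p j)) (at (p j) within {s. s \<ge> 0})"
      by (rule upd1_tendsto[OF tendsto_ident_at])
    show "p(j := p j) \<in> orthant n" using p by simp
    show "\<forall>\<^sub>F x in at (p j) within {s. 0 \<le> s}. p(j := x) \<in> orthant n"
      using ev_within_self[of "{s. 0 \<le> s}" "p j"] by eventually_elim (use orth_upd_iff p j in auto)
  qed
  then show ?thesis by simp
qed

lemma core:
  assumes G: "sm (Suc n) G" and p: "p \<in> orthant n" and j: "j \<in> {1..n}"
  shows "\<exists>c. (c \<longlongrightarrow> dd (Suc n) (Suc n) G (p(Suc n := hh p))) (at (p j) within {s. s \<ge> 0}) \<and>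
     (\<forall>s\<ge>0. G (p(j := s, Suc n := hh (p(j := s)))) - G (p(j := s, Suc n := hh p))
        = c s * (hh (p(j := s)) - hh p))"
proof -
  define Gq where "Gq = dd (Suc n) (Suc n) G"
  have line: "((\<lambda>u. G (p(j := s, Suc n := u))) has_real_derivative Gq (p(j := s, Suc n := t))) (at t within {t. t \<ge> 0})"
    if "s \<ge> 0" "t \<ge> 0" for s t
    using orth_partial_line[OF Yo[OF p j that(1) order_refl] orth_m that(2) dd(2)[OF G orth_m]]
    unfolding Gq_def by simp
  have hs0: "hh (p(j := s)) \<ge> 0" if "s \<ge> 0" for s
    using hh0 orth_upd_iff[OF p j] that by blast
  have hp0: "hh p \<ge> 0" using hh0 p by blast
  have ex: "\<exists>\<xi>. min (hh p) (hh (p(j := s))) \<le> \<xi> \<and> \<xi> \<le> max (hh p) (hh (p(j := s))) \<and>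
     G (p(j := s, Suc n := hh (p(j := s)))) - G (p(j := s, Suc n := hh p)) = Gq (p(j := s, Suc n := \<xi>)) * (hh (p(j := s)) - hh p)"
    if "s \<ge> 0" for s
    by (rule mvt_half[OF line[OF that] hp0 hs0[OF that]])
  define \<xi> where "\<xi> s = (SOME \<xi>. min (hh p) (hh (p(j := s))) \<le> \<xi> \<and> \<xi> \<le> max (hh p) (hh (p(j := s))) \<and>
     G (p(j := s, Suc n := hh (p(j := s)))) - G (p(j := s, Suc n := hh p)) = Gq (p(j := s, Suc n := \<xi>)) * (hh (p(j := s)) - hh p))" for s
  have xi: "min (hh p) (hh (p(j := s))) \<le> \<xi> s \<and> \<xi> s \<le> max (hh p) (hh (p(j := s))) \<and>
     G (p(j := s, Suc n := hh (p(j := s)))) - G (p(j := s, Suc n := hh p)) = Gq (p(j := s, Suc n := \<xi> s)) * (hh (p(j := s)) - hh p)"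
    if "s \<ge> 0" for s
    unfolding \<xi>_def by (rule someI_ex[OF ex[OF that]])
  let ?F = "at (p j) within {s. s \<ge> 0}"
  have hs: "((\<lambda>s. hh (p(j := s))) \<longlongrightarrow> hh p) ?F" by (rule hs_tendsto[OF p j])
  have evT: "eventually (\<lambda>s. s \<ge> 0) ?F" using ev_within_self[of "{s. 0 \<le> s}" "p j"] by simp
  have xi_t: "(\<xi> \<longlongrightarrow> hh p) ?F"
  proof (rule tendsto_sandwich)
    show "eventually (\<lambda>s. min (hh p) (hh (p(j := s))) \<le> \<xi> s) ?F"
      using evT by eventually_elim (use xi in blast)
    show "eventually (\<lambda>s. \<xi> s \<le> max (hh p) (hh (p(j := s)))) ?F"
      using evT by eventually_elim (use xi in blast)
    show "((\<lambda>s. min (hh p) (hh (p(j := s)))) \<longlongrightarrow> hh p) ?F"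
      using tendsto_min[OF tendsto_const hs, of "hh p"] by simp
    show "((\<lambda>s. max (hh p) (hh (p(j := s)))) \<longlongrightarrow> hh p) ?F"
      using tendsto_max[OF tendsto_const hs, of "hh p"] by simp
  qed
  have c_t: "((\<lambda>s. Gq (p(j := s, Suc n := \<xi> s))) \<longlongrightarrow> Gq (p(j := p j, Suc n := hh p))) ?F"
  proof (rule continuous_on_tendsto_compose[OF sm_cont[OF dd(1)[OF G orth_m]], folded Gq_def])
    show "((\<lambda>s. p(j := s, Suc n := \<xi> s)) \<longlongrightarrow> p(j := p j, Suc n := hh p)) ?F"
      by (rule Y_tendsto[OF tendsto_ident_at xi_t])
    show "p(j := p j, Suc n := hh p) \<in> orthant (Suc n)" using Yo[OF p j _ hp0] orth_nonneg[OF p j] by blast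
    show "\<forall>\<^sub>F s in ?F. p(j := s, Suc n := \<xi> s) \<in> orthant (Suc n)"
      using evT
    proof eventually_elim
      case (elim s)
      have "\<xi> s \<ge> 0" using xi[OF elim] hs0[OF elim] hp0 by linarith
      then show ?case using Yo[OF p j elim] by blast
    qed
  qed
  show ?thesis
  proof (intro exI[of _ "\<lambda>s. Gq (p(j := s, Suc n := \<xi> s))"] conjI allI impI)
    show "((\<lambda>s. Gq (p(j := s, Suc n := \<xi> s))) \<longlongrightarrow> dd (Suc n) (Suc n) G (p(Suc n := hh p))) ?F"
      using c_t unfolding Gq_def by simp
    fix s :: real assume "s \<ge> 0"
    then show "G (p(j := s, Suc n := hh (p(j := s)))) - G (p(j := s, Suc n := hh p)) =
       Gq (p(j := s, Suc n := \<xi> s)) * (hh (p(j := s)) - hh p)" using xi by blast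
  qed
qed

end


context impl begin

lemma gj:
  assumes G: "sm (Suc n) G" and p: "p \<in> orthant n" and j: "j \<in> {1..n}"
  shows "((\<lambda>s. G (p(j := s, Suc n := hh p))) has_real_derivative dd (Suc n) j G (p(Suc n := hh p)))
    (at (p j) within {s. s \<ge> 0})"
proof -
  have hp0: "hh p \<ge> 0" using hh0 p by blast
  have Y0: "p(Suc n := hh p) \<in> orthant (Suc n)" using orth_ext[OF p hp0] .
  have "has_partial G j (dd (Suc n) j G (p(Suc n := hh p))) (p(Suc n := hh p)) (orthant (Suc n))"
    using dd(2)[OF G orth_j[OF j]] Y0 by blast
  then have "((\<lambda>t. G ((p(Suc n := hh p))(j := t))) has_real_derivative dd (Suc n) j G (p(Suc n := hh p)))
     (at ((p(Suc n := hh p)) j) within {t. t \<ge> 0})"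
    using has_partial_orth[OF Y0 orth_j[OF j]] by simp
  moreover have "j \<noteq> Suc n" using j by simp
  ultimately show ?thesis by (simp add: fun_upd_twist)
qed

definition hd where
  "hd j p = - dd (Suc n) j H (p(Suc n := hh p)) / dd (Suc n) (Suc n) H (p(Suc n := hh p))"

lemma hh_deriv:
  assumes p: "p \<in> orthant n" and j: "j \<in> {1..n}"
  shows "((\<lambda>s. hh (p(j := s))) has_real_derivative hd j p) (at (p j) within {s. s \<ge> 0})"
proof -
  let ?F = "at (p j) within {s. s \<ge> 0}"
  let ?Y0 = "p(Suc n := hh p)"
  have hp0: "hh p \<ge> 0" using hh0 p by blast
  have Y0: "?Y0 \<in> orthant (Suc n)" using orth_ext[OF p hp0] .
  obtain c where c: "(c \<longlongrightarrow> dd (Suc n) (Suc n) H ?Y0) ?F"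
    "\<forall>s\<ge>0. H (p(j := s, Suc n := hh (p(j := s)))) - H (p(j := s, Suc n := hh p)) = c s * (hh (p(j := s)) - hh p)"
    using core[OF smH p j] by blast
  have H0: "H ?Y0 = 0" using hhz p by blast
  have Hs: "H (p(j := s, Suc n := hh (p(j := s)))) = 0" if "s \<ge> 0" for s
    using hhz orth_upd_iff[OF p j] that by blast
  have QH: "((\<lambda>s. (H (p(j := s, Suc n := hh p)) - H (p(j := p j, Suc n := hh p))) / (s - p j))
     \<longlongrightarrow> dd (Suc n) j H ?Y0) ?F"
    using gj[OF smH p j] unfolding has_field_derivative_iff .
  then have QH': "((\<lambda>s. H (p(j := s, Suc n := hh p)) / (s - p j)) \<longlongrightarrow> dd (Suc n) j H ?Y0) ?F"
    using H0 by simp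
  have neg: "dd (Suc n) (Suc n) H ?Y0 < 0" using Hneg Y0 by blast
  have evc: "eventually (\<lambda>s. c s < 0) ?F" using order_tendstoD(2)[OF c(1) neg] .
  have evT: "eventually (\<lambda>s. s \<ge> 0) ?F" using ev_within_self[of "{s. 0 \<le> s}" "p j"] by simp
  have eq: "eventually (\<lambda>s. - (H (p(j := s, Suc n := hh p)) / (s - p j)) / c s
      = (hh (p(j := s)) - hh (p(j := p j))) / (s - p j)) ?F"
    using evc evT
  proof eventually_elim
    case (elim s)
    have "c s * (hh (p(j := s)) - hh p) = - H (p(j := s, Suc n := hh p))"
      using c(2) Hs[OF elim(2)] elim(2) by force
    then have e1: "hh (p(j := s)) - hh p = - H (p(j := s, Suc n := hh p)) / c s"
      using elim(1) by (simp add: field_simps)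
    have "- (H (p(j := s, Suc n := hh p)) / (s - p j)) / c s = (- H (p(j := s, Suc n := hh p)) / c s) / (s - p j)"
      by simp
    then show ?case unfolding e1[symmetric] by simp
  qed
  have "((\<lambda>s. - (H (p(j := s, Suc n := hh p)) / (s - p j)) / c s) \<longlongrightarrow>
      - dd (Suc n) j H ?Y0 / dd (Suc n) (Suc n) H ?Y0) ?F"
    by (rule tendsto_divide[OF tendsto_minus[OF QH'] c(1)]) (use neg in simp)
  then have "((\<lambda>s. (hh (p(j := s)) - hh (p(j := p j))) / (s - p j)) \<longlongrightarrow> hd j p) ?F"
    unfolding hd_def using tendsto_cong[OF eq] by simp
  then show ?thesis unfolding has_field_derivative_iff by simp
qed

lemma comp_deriv:
  assumes G: "sm (Suc n) G" and p: "p \<in> orthant n" and j: "j \<in> {1..n}"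
  shows "((\<lambda>s. G (p(j := s, Suc n := hh (p(j := s))))) has_real_derivative
     dd (Suc n) j G (p(Suc n := hh p)) + dd (Suc n) (Suc n) G (p(Suc n := hh p)) * hd j p)
     (at (p j) within {s. s \<ge> 0})"
proof -
  let ?F = "at (p j) within {s. s \<ge> 0}"
  let ?Y0 = "p(Suc n := hh p)"
  obtain c where c: "(c \<longlongrightarrow> dd (Suc n) (Suc n) G ?Y0) ?F"
    "\<forall>s\<ge>0. G (p(j := s, Suc n := hh (p(j := s)))) - G (p(j := s, Suc n := hh p)) = c s * (hh (p(j := s)) - hh p)"
    using core[OF G p j] by blast
  have QG: "((\<lambda>s. (G (p(j := s, Suc n := hh p)) - G (p(j := p j, Suc n := hh p))) / (s - p j))
     \<longlongrightarrow> dd (Suc n) j G ?Y0) ?F"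
    using gj[OF G p j] unfolding has_field_derivative_iff .
  have Qh: "((\<lambda>s. (hh (p(j := s)) - hh (p(j := p j))) / (s - p j)) \<longlongrightarrow> hd j p) ?F"
    using hh_deriv[OF p j] unfolding has_field_derivative_iff .
  have evT: "eventually (\<lambda>s. s \<ge> 0) ?F" using ev_within_self[of "{s. 0 \<le> s}" "p j"] by simp
  have eq: "eventually (\<lambda>s. c s * ((hh (p(j := s)) - hh (p(j := p j))) / (s - p j)) +
       (G (p(j := s, Suc n := hh p)) - G (p(j := p j, Suc n := hh p))) / (s - p j)
     = (G (p(j := s, Suc n := hh (p(j := s)))) - G (p(j := p j, Suc n := hh (p(j := p j))))) / (s - p j)) ?F"
    using evT
  proof eventually_elim
    case (elim s)
    have e2: "G (p(j := s, Suc n := hh (p(j := s)))) = c s * (hh (p(j := s)) - hh p) + G (p(j := s, Suc n := hh p))"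
      using c(2) elim by force
    have "c s * ((hh (p(j := s)) - hh p) / (s - p j)) + (G (p(j := s, Suc n := hh p)) - G (p(Suc n := hh p))) / (s - p j)
       = (c s * (hh (p(j := s)) - hh p) + G (p(j := s, Suc n := hh p)) - G (p(Suc n := hh p))) / (s - p j)"
      by (simp add: add_divide_distrib diff_divide_distrib right_diff_distrib)
    then show ?case unfolding e2 by simp
  qed
  have "((\<lambda>s. c s * ((hh (p(j := s)) - hh (p(j := p j))) / (s - p j)) +
       (G (p(j := s, Suc n := hh p)) - G (p(j := p j, Suc n := hh p))) / (s - p j)) \<longlongrightarrow>
     dd (Suc n) (Suc n) G ?Y0 * hd j p + dd (Suc n) j G ?Y0) ?F"
    by (rule tendsto_add[OF tendsto_mult[OF c(1) Qh] QG])
  then have "((\<lambda>s. (G (p(j := s, Suc n := hh (p(j := s)))) - G (p(j := p j, Suc n := hh (p(j := p j))))) / (s - p j))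
     \<longlongrightarrow> dd (Suc n) j G ?Y0 + dd (Suc n) (Suc n) G ?Y0 * hd j p) ?F"
    using tendsto_cong[OF eq] by (simp add: add.commute)
  then show ?thesis unfolding has_field_derivative_iff by simp
qed

end


context impl begin

definition Psi where
  "Psi G j y = dd (Suc n) j G y + dd (Suc n) (Suc n) G y *
      ((- 1) * dd (Suc n) j H y * (1 / dd (Suc n) (Suc n) H y))"

lemma Psi_sm: "sm (Suc n) G \<Longrightarrow> j \<in> {1..n} \<Longrightarrow> sm (Suc n) (Psi G j)"
proof -
  assume G: "sm (Suc n) G" and j: "j \<in> {1..n}"
  have nz: "\<forall>p\<in>orthant (Suc n). dd (Suc n) (Suc n) H p \<noteq> 0" using Hneg by force
  have "sm (Suc n) (\<lambda>y. dd (Suc n) j G y + dd (Suc n) (Suc n) G y *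
      ((- 1) * dd (Suc n) j H y * (1 / dd (Suc n) (Suc n) H y)))"
    by (intro sm_add sm_mult sm_cmult dd(1) G smH orth_m orth_j[OF j] sm_inverse nz)
  then show ?thesis unfolding Psi_def[abs_def] .
qed

lemma comp_partial:
  assumes G: "sm (Suc n) G" and p: "p \<in> orthant n" and j: "j \<in> {1..n}"
  shows "has_partial (\<lambda>x. G (x(Suc n := hh x))) j (Psi G j (p(Suc n := hh p))) p (orthant n)"
proof -
  have "Psi G j (p(Suc n := hh p)) = dd (Suc n) j G (p(Suc n := hh p)) + dd (Suc n) (Suc n) G (p(Suc n := hh p)) * hd j p"
    unfolding Psi_def hd_def by simp
  then show ?thesis unfolding has_partial_orth[OF p j] using comp_deriv[OF G p j] by simp
qed

lemma sm_comp:
  assumes G: "sm (Suc n) G"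
  shows "sm n (\<lambda>x. G (x(Suc n := hh x)))"
proof -
  define P where "P g = (\<exists>G. sm (Suc n) G \<and> (\<forall>x\<in>orthant n. g x = G (x(Suc n := hh x))))" for g
  have "closedP n P" unfolding closedP_def
  proof (intro allI impI conjI ballI)
    fix g assume "P g"
    then obtain G where G: "sm (Suc n) G" "\<forall>x\<in>orthant n. g x = G (x(Suc n := hh x))"
      unfolding P_def by (elim exE conjE)
    show "continuous_on (orthant n) g"
      by (rule continuous_on_eq[OF comp_cont[OF G(1)]]) (use G(2) in auto)
    fix j assume j: "j \<in> {1..n}"
    have "P (\<lambda>x. Psi G j (x(Suc n := hh x)))" unfolding P_def
      by (intro exI[of _ "Psi G j"] conjI Psi_sm[OF G(1) j]) simp
    moreover have "\<forall>p\<in>orthant n. has_partial g j ((\<lambda>x. Psi G j (x(Suc n := hh x))) p) p (orthant n)"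
    proof
      fix p assume p: "p \<in> orthant n"
      show "has_partial g j ((\<lambda>x. Psi G j (x(Suc n := hh x))) p) p (orthant n)"
        using has_partial_cong[of n "\<lambda>x. G (x(Suc n := hh x))" g p j, OF _ p j] comp_partial[OF G(1) p j] G(2)
        by simp
    qed
    ultimately show "\<exists>g'. P g' \<and> (\<forall>p\<in>orthant n. has_partial g j (g' p) p (orthant n))"
      by (intro exI[of _ "\<lambda>x. Psi G j (x(Suc n := hh x))"] conjI)
  qed
  moreover have "P (\<lambda>x. G (x(Suc n := hh x)))" unfolding P_def
    by (intro exI[of _ G] conjI assms) simp
  ultimately show ?thesis using sm_coind[of n P "\<lambda>x. G (x(Suc n := hh x))"] by blast
qed

end


definition Smk where "Smk D k = (\<forall>i\<in>{1..k}. sm k (D k i))"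
definition Crk where "Crk D k = (\<forall>i\<in>{1..k}. \<forall>j\<in>{1..k}. j \<noteq> i \<longrightarrow> (\<forall>p\<in>orthant k. \<forall>d.
               has_partial (D k i) j d p (orthant k) \<longrightarrow> d > 0))"
definition Owk where "Owk D k = (\<forall>i\<in>{1..k}. \<forall>p\<in>orthant k. \<forall>d.
               has_partial (D k i) i d p (orthant k) \<longrightarrow> d < 0)"
definition Exk where "Exk D k = (\<forall>i\<in>{1..k}. \<forall>j\<in>{1..k}. \<forall>p\<in>orthant k.
            D k i p = (D k j (p(i := p j, j := p i)) :: real))"

lemma swap_orth: "x \<in> orthant m \<Longrightarrow> i \<in> {1..m} \<Longrightarrow> j \<in> {1..m} \<Longrightarrow> x(i := x j, j := x i) \<in> orthant m"
  unfolding orthant_def by auto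

lemma triple:
  assumes E: "Exk D m" and x: "x \<in> orthant m" and ijk: "i \<in> {1..m}" "j \<in> {1..m}" "k \<in> {1..m}"
    and ne: "k \<noteq> i" "k \<noteq> j"
  shows "D m k (x(i := x j, j := x i)) = D m k x"
proof (cases "i = j")
  case True then show ?thesis by simp
next
  case False
  define y where "y = x(i := x j, j := x i)"
  define z where "z = y(k := y i, i := y k)"
  define w where "w = z(i := z j, j := z i)"
  have y: "y \<in> orthant m" unfolding y_def by (rule swap_orth[OF x ijk(1,2)])
  have z: "z \<in> orthant m" unfolding z_def by (rule swap_orth[OF y ijk(3,1)])
  have w: "w \<in> orthant m" unfolding w_def by (rule swap_orth[OF z ijk(1,2)])
  have "D m k y = D m i z" using E y ijk unfolding Exk_def z_def by blast
  also have "\<dots> = D m j w" using E z ijk unfolding Exk_def w_def by blast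
  also have "\<dots> = D m k (w(j := w k, k := w j))" using E w ijk unfolding Exk_def by blast
  also have "w(j := w k, k := w j) = x"
    unfolding w_def z_def y_def using False ne by (auto simp: fun_eq_iff)
  finally show ?thesis unfolding y_def .
qed

lemma step:
  fixes D :: "nat \<Rightarrow> nat \<Rightarrow> (nat \<Rightarrow> real) \<Rightarrow> real"
  assumes n: "n \<ge> 1"
    and S: "Smk D (Suc n)" and C: "Crk D (Suc n)" and O: "Owk D (Suc n)" and E: "Exk D (Suc n)"
    and rec: "\<forall>p\<in>orthant n. \<exists>q\<ge>0. D (Suc n) (Suc n) (p(Suc n := q)) = 0 \<and>
               (\<forall>i\<in>{1..n}. D n i p = D (Suc n) i (p(Suc n := q)))"
  shows "Smk D n \<and> Crk D n \<and> Exk D n"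
proof -
  let ?m = "Suc n"
  define H where "H = D ?m ?m"
  define hh where "hh p = (SOME q. q \<ge> 0 \<and> D ?m ?m (p(?m := q)) = 0 \<and>
               (\<forall>i\<in>{1..n}. D n i p = D ?m i (p(?m := q))))" for p
  have hh: "hh p \<ge> 0 \<and> D ?m ?m (p(?m := hh p)) = 0 \<and> (\<forall>i\<in>{1..n}. D n i p = D ?m i (p(?m := hh p)))"
    if "p \<in> orthant n" for p
    unfolding hh_def by (rule someI_ex) (use rec that in blast)
  have smH: "sm ?m H" using S unfolding Smk_def H_def by simp
  have Hneg: "\<forall>x\<in>orthant ?m. dd ?m ?m H x < 0"
  proof
    fix x assume x: "x \<in> orthant ?m"
    have "has_partial H ?m (dd ?m ?m H x) x (orthant ?m)" using dd(2)[OF smH orth_m] x by blast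
    then show "dd ?m ?m H x < 0" using O x orth_m unfolding Owk_def H_def by blast
  qed
  interpret impl n H hh
    by unfold_locales (use smH Hneg hh in \<open>auto simp: H_def\<close>)
  have Dn: "\<forall>x\<in>orthant n. (\<lambda>x. D ?m i (x(?m := hh x))) x = D n i x" if "i \<in> {1..n}" for i
    using hh that by simp
  have smn: "sm n (D n i)" if i: "i \<in> {1..n}" for i
  proof -
    have "sm ?m (D ?m i)" using S i unfolding Smk_def by simp
    then show ?thesis using sm_cong[OF sm_comp Dn[OF i]] by simp
  qed
  have crn: "d > 0" if i: "i \<in> {1..n}" and j: "j \<in> {1..n}" and ji: "j \<noteq> i" and p: "p \<in> orthant n"
    and d: "has_partial (D n i) j d p (orthant n)" for i j p d
  proof -
    let ?Y = "p(?m := hh p)"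
    have Y: "?Y \<in> orthant ?m" using orth_ext p hh0 by blast
    have G: "sm ?m (D ?m i)" using S i unfolding Smk_def by simp
    have "has_partial (\<lambda>x. D ?m i (x(?m := hh x))) j d p (orthant n)"
      using has_partial_cong[of n "D n i" "\<lambda>x. D ?m i (x(?m := hh x))" p j d] Dn[OF i] p j d by simp
    then have dv: "d = Psi (D ?m i) j ?Y"
      using has_partial_unique[OF p j _ comp_partial[OF G p j]] by simp
    have A: "dd ?m j (D ?m i) ?Y > 0"
      using C dd(2)[OF G orth_j[OF j]] Y i j ji unfolding Crk_def by (meson orth_j)
    have B: "dd ?m ?m (D ?m i) ?Y > 0"
      using C dd(2)[OF G orth_m] Y i unfolding Crk_def by (metis orth_j orth_m le_imp_less_Suc atLeastAtMost_iff less_irrefl)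
    have Cc: "dd ?m j H ?Y > 0"
      using C dd(2)[OF smH orth_j[OF j]] Y j unfolding Crk_def H_def
      by (metis orth_j orth_m le_imp_less_Suc atLeastAtMost_iff less_irrefl)
    have Ee: "dd ?m ?m H ?Y < 0" using Hneg Y by blast
    have "(- 1) * dd ?m j H ?Y * (1 / dd ?m ?m H ?Y) > 0"
      using Cc Ee by (simp add: divide_pos_neg)
    then have "dd ?m ?m (D ?m i) ?Y * ((- 1) * dd ?m j H ?Y * (1 / dd ?m ?m H ?Y)) > 0"
      by (rule mult_pos_pos[OF B])
    moreover have "Psi (D ?m i) j ?Y = dd ?m j (D ?m i) ?Y + dd ?m ?m (D ?m i) ?Y * ((- 1) * dd ?m j H ?Y * (1 / dd ?m ?m H ?Y))"
      by (rule Psi_def)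
    ultimately show ?thesis unfolding dv using A by linarith
  qed
  have exn: "D n i p = D n j (p(i := p j, j := p i))" if i: "i \<in> {1..n}" and j: "j \<in> {1..n}"
    and p: "p \<in> orthant n" for i j p
  proof -
    define p' where "p' = p(i := p j, j := p i)"
    have p': "p' \<in> orthant n" unfolding p'_def by (rule swap_orth[OF p i j])
    have ij: "i \<noteq> ?m" "j \<noteq> ?m" using i j by auto
    have sw: "(p(?m := hh p))(i := p j, j := p i) = p'(?m := hh p)"
      unfolding p'_def using ij by (auto simp: fun_eq_iff)
    have Y: "p(?m := hh p) \<in> orthant ?m" using orth_ext p hh0 by blast
    have "D ?m ?m (p'(?m := hh p)) = D ?m ?m (p(?m := hh p))"
      using triple[OF E Y orth_j[OF i] orth_j[OF j] orth_m] ij sw by simp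
    also have "\<dots> = 0" using hh[OF p] by simp
    finally have "hh p = hh p'" using hh_unique[OF p'] hh0 p unfolding H_def by blast
    have "D n i p = D ?m i (p(?m := hh p))" using hh[OF p] i by blast
    also have "\<dots> = D ?m j ((p(?m := hh p))(i := (p(?m := hh p)) j, j := (p(?m := hh p)) i))"
      using E Y orth_j[OF i] orth_j[OF j] unfolding Exk_def by blast
    also have "\<dots> = D ?m j (p'(?m := hh p'))" using ij sw \<open>hh p = hh p'\<close> by simp
    also have "\<dots> = D n j p'" using hh[OF p'] j by simp
    finally show ?thesis unfolding p'_def .
  qed
  show ?thesis unfolding Smk_def Crk_def Exk_def using smn crn exn by blast
qed



lemma order_level:
  fixes D :: "nat \<Rightarrow> nat \<Rightarrow> (nat \<Rightarrow> real) \<Rightarrow> real"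
  assumes S: "Smk D k" and C: "Crk D k" and O: "Owk D k" and E: "Exk D k"
    and q: "q \<in> orthant k" and i: "1 \<le> i" "i < k" and le: "q i \<le> q (i+1)"
  shows "D k i q \<ge> D k (i+1) q"
proof -
  have ik: "i \<in> {1..k}" "i + 1 \<in> {1..k}" using i by auto
  have G: "sm k (D k i)" using S ik unfolding Smk_def by blast
  have "D k (i+1) q = D k i (q(i+1 := q i, i := q (i+1)))"
    using E q ik unfolding Exk_def by blast
  also have "q(i+1 := q i, i := q (i+1)) = (q(i := q (i+1)))(i+1 := q i)"
    by (auto simp: fun_eq_iff)
  finally have e: "D k (i+1) q = D k i ((q(i := q (i+1)))(i+1 := q i))" .
  have a0: "q i \<ge> 0" using orth_nonneg[OF q ik(1)] .
  have step1: "D k i (q(i := q (i+1))) \<le> D k i q"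
  proof (cases "q i = q (i+1)")
    case True
    then have "q(i := q (i+1)) = q" by (auto simp: fun_eq_iff)
    then show ?thesis by simp
  next
    case False
    then have lt: "q i < q (i+1)" using le by simp
    have "D k i (q(i := q i)) > D k i (q(i := q (i+1)))"
    proof (rule orth_decr[OF q ik(1) dd(2)[OF G ik(1)] _ a0 lt])
      show "\<forall>x\<in>orthant k. dd k i (D k i) x < 0"
        using O dd(2)[OF G ik(1)] ik unfolding Owk_def by blast
    qed
    then show ?thesis by simp
  qed
  have q1: "q(i := q (i+1)) \<in> orthant k" using orth_upd_iff[OF q ik(1)] orth_nonneg[OF q ik(2)] by blast
  have step2: "D k i ((q(i := q (i+1)))(i+1 := q i)) \<le> D k i ((q(i := q (i+1)))(i+1 := q (i+1)))"
  proof (rule orth_incr[OF q1 ik(2) dd(2)[OF G ik(2)] _ a0 le])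
    show "\<forall>x\<in>orthant k. dd k (i+1) (D k i) x > 0"
      using C dd(2)[OF G ik(2)] ik unfolding Crk_def by (metis Suc_eq_plus1 n_not_Suc_n)
  qed
  have "(q(i := q (i+1)))(i+1 := q (i+1)) = q(i := q (i+1))" by (auto simp: fun_eq_iff)
  then show ?thesis using e step1 step2 by simp
qed

theorem proposition2p3:
  fixes N :: nat and D :: "nat \<Rightarrow> nat \<Rightarrow> (nat \<Rightarrow> real) \<Rightarrow> real"
  assumes N2: "N \<ge> 2"
    \<comment> \<open>(A1)\<close>
    and A1_smooth: "\<forall>i\<in>{1..N}. smooth_on_orthant N (D N i)"
    and A1_zero: "D N N (\<lambda>_. 0) > 0"
    and A1_own: "\<forall>i\<in>{1..N}. \<forall>p\<in>orthant N. \<forall>d.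
                   has_partial (D N i) i d p (orthant N) \<longrightarrow> d < 0"
    and A1_cross: "\<forall>i\<in>{1..N}. \<forall>j\<in>{1..N}. j \<noteq> i \<longrightarrow> (\<forall>p\<in>orthant N. \<forall>d.
                   has_partial (D N i) j d p (orthant N) \<longrightarrow> d > 0)"
    \<comment> \<open>(A2)\<close>
    and A2: "\<forall>i\<in>{1..N}. \<forall>j\<in>{1..N}. \<forall>p\<in>orthant N.
               D N i p = D N j (p(i := p j, j := p i))"
    \<comment> \<open>(A3)\<close>
    and A3: "\<forall>i\<in>{1..N}. \<forall>p\<in>orthant N. \<exists>q\<ge>0. D N i (p(i := q)) = 0"
    \<comment> \<open>consistency recursion\<close>
    and rec: "\<forall>n\<in>{1..N-1}. \<forall>p\<in>orthant n. \<exists>q\<ge>0.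
               D (n+1) (n+1) (p(n+1 := q)) = 0 \<and>
               (\<forall>i\<in>{1..n}. D n i p = D (n+1) i (p(n+1 := q)))"
    \<comment> \<open>(A4)\<close>
    and A4: "\<forall>n\<in>{1..N-1}. \<forall>i\<in>{1..n}. \<forall>p\<in>orthant n. \<forall>d.
               has_partial (D n i) i d p (orthant n) \<longrightarrow> d < 0"
  shows "(\<forall>n\<in>{1..N-1}. \<forall>i\<in>{1..n}.
            smooth_on_orthant n (D n i) \<and>
            (\<forall>j\<in>{1..n}. j \<noteq> i \<longrightarrow> (\<forall>p\<in>orthant n. \<forall>d.
               has_partial (D n i) j d p (orthant n) \<longrightarrow> d > 0)))
       \<and> (\<forall>n\<in>{1..N-1}. \<forall>i\<in>{1..n}. \<forall>j\<in>{1..n}. \<forall>p\<in>orthant n.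
            D n i p = D n j (p(i := p j, j := p i)))
       \<and> (\<forall>p\<in>orthant N. (\<forall>i j. 1 \<le> i \<longrightarrow> i \<le> j \<longrightarrow> j \<le> N \<longrightarrow> p i \<le> p j) \<longrightarrow>
            (\<forall>n\<in>{1..N}. \<forall>i. 1 \<le> i \<longrightarrow> i < n \<longrightarrow>
               D n i (restr n p) \<ge> D n (i+1) (restr n p)))"
proof -
  have SN: "Smk D N" unfolding Smk_def using A1_smooth .
  have CN: "Crk D N" unfolding Crk_def using A1_cross .
  have EN: "Exk D N" unfolding Exk_def using A2 .
  have OW: "Owk D n" if "n \<in> {1..N}" for n
  proof (cases "n = N")
    case True then show ?thesis unfolding Owk_def using A1_own by simp
  next
    case False then have "n \<in> {1..N-1}" using that by auto
    then show ?thesis unfolding Owk_def using A4 by blast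
  qed
  have all: "d + 1 \<le> N \<Longrightarrow> Smk D (N - d) \<and> Crk D (N - d) \<and> Exk D (N - d)" for d
  proof (induction d)
    case 0 then show ?case using SN CN EN by simp
  next
    case (Suc d)
    define n where "n = N - Suc d"
    have n1: "n \<ge> 1" using Suc.prems unfolding n_def by simp
    have mN: "Suc n = N - d" using Suc.prems unfolding n_def by simp
    have IH: "Smk D (Suc n) \<and> Crk D (Suc n) \<and> Exk D (Suc n)" using Suc mN by simp
    have Om: "Owk D (Suc n)" using OW[of "Suc n"] mN Suc.prems by simp
    have nr: "n \<in> {1..N-1}" using n1 Suc.prems unfolding n_def by simp
    have rn: "\<forall>p\<in>orthant n. \<exists>q\<ge>0. D (Suc n) (Suc n) (p(Suc n := q)) = 0 \<and>
               (\<forall>i\<in>{1..n}. D n i p = D (Suc n) i (p(Suc n := q)))"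
      using rec nr by simp
    have "Smk D n \<and> Crk D n \<and> Exk D n" using step[OF n1 _ _ Om _ rn] IH by blast
    then show ?case unfolding n_def .
  qed
  have lev: "Smk D n \<and> Crk D n \<and> Exk D n \<and> Owk D n" if n: "n \<in> {1..N}" for n
  proof -
    have "N - (N - n) = n" using n by simp
    moreover have "(N - n) + 1 \<le> N" using n by auto
    ultimately show ?thesis using all[of "N - n"] OW[OF n] by simp
  qed
  have c1: "\<forall>n\<in>{1..N-1}. \<forall>i\<in>{1..n}.
            smooth_on_orthant n (D n i) \<and>
            (\<forall>j\<in>{1..n}. j \<noteq> i \<longrightarrow> (\<forall>p\<in>orthant n. \<forall>d.
               has_partial (D n i) j d p (orthant n) \<longrightarrow> d > 0))"
  proof (intro ballI)
    fix n i assume n: "n \<in> {1..N-1}" and i: "i \<in> {1..n}"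
    have "n \<in> {1..N}" using n by auto
    then show "smooth_on_orthant n (D n i) \<and>
            (\<forall>j\<in>{1..n}. j \<noteq> i \<longrightarrow> (\<forall>p\<in>orthant n. \<forall>d.
               has_partial (D n i) j d p (orthant n) \<longrightarrow> d > 0))"
      using lev i unfolding Smk_def Crk_def by blast
  qed
  have c2: "\<forall>n\<in>{1..N-1}. \<forall>i\<in>{1..n}. \<forall>j\<in>{1..n}. \<forall>p\<in>orthant n.
            D n i p = D n j (p(i := p j, j := p i))"
  proof (intro ballI)
    fix n i j p assume n: "n \<in> {1..N-1}" and "i \<in> {1..n}" "j \<in> {1..n}" "p \<in> orthant n"
    moreover have "n \<in> {1..N}" using n by auto
    ultimately show "D n i p = D n j (p(i := p j, j := p i))"
      using lev unfolding Exk_def by blast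
  qed
  have c3: "\<forall>p\<in>orthant N. (\<forall>i j. 1 \<le> i \<longrightarrow> i \<le> j \<longrightarrow> j \<le> N \<longrightarrow> p i \<le> p j) \<longrightarrow>
            (\<forall>n\<in>{1..N}. \<forall>i. 1 \<le> i \<longrightarrow> i < n \<longrightarrow>
               D n i (restr n p) \<ge> D n (i+1) (restr n p))"
  proof (intro ballI impI allI)
    fix p n i assume p: "p \<in> orthant N" and sorted: "\<forall>i j. 1 \<le> i \<longrightarrow> i \<le> j \<longrightarrow> j \<le> N \<longrightarrow> p i \<le> p j"
      and n: "n \<in> {1..N}" and i: "1 \<le> i" "i < n"
    have q: "restr n p \<in> orthant n" using p n unfolding orthant_def restr_def by auto
    have le: "restr n p i \<le> restr n p (i+1)" using sorted i n unfolding restr_def by auto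
    show "D n i (restr n p) \<ge> D n (i+1) (restr n p)"
      using order_level[of D n "restr n p" i] lev[OF n] q i le by blast
  qed
  show ?thesis using c1 c2 c3 by blast
qed


end
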